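(* Let $0<\alpha\le 1$ and let $G$ be the differential (Helmholtz) filter on $L^2(\Omega)^d$ with filter radius $\delta>0$. Then the operators $D_\alpha=[(1-\alpha)G+\alpha I]^{-1}$, $D_\alpha G$ and $I-D_\alpha G$ are bounded linear operators on $L^2(\Omega)^d$, and $$\|D_\alpha\|\le\frac{1}{\alpha},\qquad \|D_\alpha G\|\le 1,\qquad \|I-D_\alpha G\|\le 1,$$ where $\|\cdot\|$ denotes the operator norm induced by the $L^2(\Omega)^d$ norm.
   Context: Let $\Omega\subset\mathbb{R}^n$ be a regular, bounded, polyhedral domain, $d\ge1$, and let $\|\cdot\|$, $(\cdot,\cdot)$ denote the $L^2(\Omega)^d$ norm and inner product. Let $X=H^1_0(\Omega)^d$. Fix $\delta>0$. The differential filter $G:L^2(\Omega)^d\to X$ is defined by $Gu=\bar u$, where $\bar u\in X$ is the unique solution of $\delta^2(\nabla\bar u,\nabla v)+(\bar u,v)=(u,v)$ for all $v\in X$ (the weak form of $-\delta^2\Delta\bar u+\bar u=u$ in $\Omega$, $\bar u=0$ on $\partial\Omega$). Regarded as an operator on $L^2(\Omega)^d$, $G$ is bounded, self-adjoint, injective and satisfies $0\le (Gv,v)\le \|v\|^2$. *)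

theory Defs
  imports "HOL-Analysis.Analysis"
begin

text \<open>Abstract interface of the differential (Helmholtz) filter G on the real
Hilbert space L2(Omega)^d: bounded, linear, self-adjoint, injective and
0 <= (Gv,v) <= norm v squared.\<close>

definition helmholtz_filter_like :: "('a::real_inner \<Rightarrow> 'a) \<Rightarrow> bool" where
  "helmholtz_filter_like G \<longleftrightarrow>
     bounded_linear G \<and>
     (\<forall>u v. inner (G u) v = inner u (G v)) \<and>
     inj G \<and>
     (\<forall>v. 0 \<le> inner (G v) v \<and> inner (G v) v \<le> (norm v)\<^sup>2)"

end

theory Submission
  imports Defs
begin

lemma G_basic:
  fixes G :: "'a::real_inner \<Rightarrow> 'a"
  assumes H: "helmholtz_filter_like G"
  shows "G v \<bullet> G v \<le> G v \<bullet> v"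
proof -
  have bl: "bounded_linear G" and sym: "\<And>u w. G u \<bullet> w = u \<bullet> G w"
    and pos: "\<And>w. 0 \<le> G w \<bullet> w" and up: "\<And>w. G w \<bullet> w \<le> (norm w)\<^sup>2"
    using H unfolding helmholtz_filter_like_def by auto
  interpret linear G using bl bounded_linear.linear by blast
  have "0 \<le> G (v - G v) \<bullet> (v - G v)" by (rule pos)
  also have "\<dots> = G v \<bullet> v - 2 * (G v \<bullet> G v) + G (G v) \<bullet> G v"
    using sym[of v "G v"] by (simp add: diff inner_diff_left inner_diff_right inner_commute)
  finally have 1: "0 \<le> G v \<bullet> v - 2 * (G v \<bullet> G v) + G (G v) \<bullet> G v" .
  have "G (G v) \<bullet> G v \<le> G v \<bullet> G v" using up[of "G v"] by (simp add: power2_norm_eq_inner)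
  with 1 show ?thesis by linarith
qed

theorem mainTheorem2:
  fixes G :: "'a::{real_inner, complete_space} \<Rightarrow> 'a" and \<alpha> :: real
  assumes "helmholtz_filter_like G"
    and "0 < \<alpha>" and "\<alpha> \<le> 1"
  defines "A \<equiv> (\<lambda>v. (1 - \<alpha>) *\<^sub>R G v + \<alpha> *\<^sub>R v)"
  defines "D \<equiv> inv A"
  shows "bij A
    \<and> bounded_linear D
    \<and> bounded_linear (\<lambda>v. D (G v))
    \<and> bounded_linear (\<lambda>v. v - D (G v))
    \<and> onorm D \<le> 1 / \<alpha>
    \<and> onorm (\<lambda>v. D (G v)) \<le> 1
    \<and> onorm (\<lambda>v. v - D (G v)) \<le> 1"
proof -
  have bl: "bounded_linear G" and sym: "\<And>u w. G u \<bullet> w = u \<bullet> G w"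
    and pos: "\<And>w. 0 \<le> G w \<bullet> w" and up: "\<And>w. G w \<bullet> w \<le> (norm w)\<^sup>2"
    using assms(1) unfolding helmholtz_filter_like_def by auto
  interpret G: linear G using bl bounded_linear.linear by blast
  have cb: "\<And>v. G v \<bullet> G v \<le> G v \<bullet> v" using G_basic[OF assms(1)] .
  have upi: "\<And>w. G w \<bullet> w \<le> w \<bullet> w" using up by (simp add: power2_norm_eq_inner)
  have lin: "linear A" unfolding A_def
    by (rule linearI) (simp_all add: G.add G.scale algebra_simps)
  interpret A: linear A by (rule lin)
  have coer: "\<alpha> * norm v \<le> norm (A v)" for v
  proof -
    have "A v \<bullet> v = (1 - \<alpha>) * (G v \<bullet> v) + \<alpha> * (v \<bullet> v)" unfolding A_def
      by (simp add: inner_add_left)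
    also have "\<dots> \<ge> \<alpha> * (norm v)\<^sup>2" using pos[of v] assms(3)
      by (simp add: power2_norm_eq_inner)
    finally have "\<alpha> * (norm v)\<^sup>2 \<le> A v \<bullet> v" .
    also have "\<dots> \<le> norm (A v) * norm v" by (rule Cauchy_Schwarz_ineq2[THEN order_trans[OF abs_ge_self]])
    finally have "\<alpha> * (norm v * norm v) \<le> norm (A v) * norm v" by (simp add: power2_eq_square)
    hence h: "(\<alpha> * norm v) * norm v \<le> norm (A v) * norm v" by (simp only: mult.assoc)
    show ?thesis
    proof (cases "norm v = 0")
      case True thus ?thesis by simp
    next
      case False
      hence "0 < norm v" by simp
      thus ?thesis using h by (rule mult_right_le_imp_le[rotated])
    qed
  qed
  have injA: "inj A"
  proof (rule injI)
    fix x y assume "A x = A y"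
    hence "A (x - y) = 0" by (simp add: A.diff)
    hence "norm (x - y) = 0" using coer[of "x - y"] assms(2)
      by (metis mult_le_0_iff norm_eq_zero norm_ge_zero linorder_not_le order_antisym)
    thus "x = y" by simp
  qed
  (* surjectivity via contraction *)
  have surjA: "surj A"
  proof -
    {
      fix f
      define T where "T = (\<lambda>v. (1 / \<alpha>) *\<^sub>R f - ((1 - \<alpha>) / \<alpha>) *\<^sub>R G v + (1 - 1) *\<^sub>R v)"
      define S where "S = (\<lambda>v. f + (1 - \<alpha>) *\<^sub>R (v - G v))"
      have ig: "norm (w - G w) \<le> norm w" for w
      proof -
        have "(w - G w) \<bullet> (w - G w) = w \<bullet> w - 2 * (G w \<bullet> w) + G w \<bullet> G w"
          by (simp add: inner_diff_left inner_diff_right inner_commute)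
        also have "\<dots> \<le> w \<bullet> w" using cb[of w] pos[of w] by linarith
        finally show ?thesis by (simp add: norm_le)
      qed
      have lip: "\<forall>x y. dist (S x) (S y) \<le> (1 - \<alpha>) * dist x y"
      proof (intro allI)
        fix x y
        have "S x - S y = (1 - \<alpha>) *\<^sub>R ((x - y) - G (x - y))"
          unfolding S_def by (simp add: G.diff algebra_simps)
        hence "dist (S x) (S y) = (1 - \<alpha>) * norm ((x - y) - G (x - y))"
          using assms(3) by (simp add: dist_norm)
        also have "\<dots> \<le> (1 - \<alpha>) * norm (x - y)" using ig assms(3)
          by (intro mult_left_mono) auto
        finally show "dist (S x) (S y) \<le> (1 - \<alpha>) * dist x y" by (simp add: dist_norm)
      qed
      obtain x where x: "S x = x" using banach_fix_type[OF _ _ lip] assms(2,3) by auto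
      have "A x = f"
      proof -
        have "f + (1 - \<alpha>) *\<^sub>R (x - G x) = x" using x unfolding S_def .
        thus ?thesis unfolding A_def by (simp add: algebra_simps)
      qed
      hence "f \<in> range A" by blast
    }
    thus ?thesis by blast
  qed
  have bijA: "bij A" using injA surjA by (simp add: bij_def)
  have DA: "\<And>u. D (A u) = u" unfolding D_def using injA by simp
  have AD: "\<And>u. A (D u) = u" unfolding D_def using surjA by (simp add: surj_f_inv_f)
  have Dnorm: "norm (D w) \<le> norm w * (1 / \<alpha>)" for w
    using coer[of "D w"] assms(2) by (simp add: AD field_simps)
  have linD: "linear D"
  proof
    fix x y show "D (x + y) = D x + D y"
      using injA by (metis AD A.add injD)
  next
    fix r x show "D (r *\<^sub>R x) = r *\<^sub>R D x"
      using injA by (metis AD A.scale injD)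
  qed
  have blD: "bounded_linear D"
    using linD Dnorm by (metis bounded_linear_intro linear_add linear_scale)
  have blDG: "bounded_linear (\<lambda>v. D (G v))"
    using bounded_linear_compose[OF blD bl] .
  have blIDG: "bounded_linear (\<lambda>v. v - D (G v))"
    using bounded_linear_sub[OF bounded_linear_ident blDG] .
  have rep: "\<exists>z. \<alpha> *\<^sub>R D (G w) = G z \<and> \<alpha> *\<^sub>R w = \<alpha> *\<^sub>R z + (1 - \<alpha>) *\<^sub>R G z" for w
  proof -
    define v where "v = D (G w)"
    have Av: "(1 - \<alpha>) *\<^sub>R G v + \<alpha> *\<^sub>R v = G w" using AD[of "G w"] unfolding v_def A_def .
    define z where "z = w - (1 - \<alpha>) *\<^sub>R v"
    have "G z = G w - (1 - \<alpha>) *\<^sub>R G v" by (simp add: z_def G.diff G.scale)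
    also have "\<dots> = \<alpha> *\<^sub>R v" by (subst Av[symmetric]) simp
    finally have Gz: "G z = \<alpha> *\<^sub>R v" .
    have "\<alpha> *\<^sub>R w = \<alpha> *\<^sub>R z + (1 - \<alpha>) *\<^sub>R G z"
      unfolding Gz unfolding z_def by (simp add: algebra_simps)
    thus ?thesis using Gz unfolding v_def by (metis)
  qed
  have n1: "norm (D (G w)) \<le> norm w" for w
  proof -
    obtain z where z1: "\<alpha> *\<^sub>R D (G w) = G z" and z2: "\<alpha> *\<^sub>R w = \<alpha> *\<^sub>R z + (1 - \<alpha>) *\<^sub>R G z"
      using rep by blast
    let ?a = "z \<bullet> z" and ?b = "G z \<bullet> z" and ?c = "G z \<bullet> G z"
    have e: "(\<alpha> *\<^sub>R z + (1 - \<alpha>) *\<^sub>R G z) \<bullet> (\<alpha> *\<^sub>R z + (1 - \<alpha>) *\<^sub>R G z)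
        = \<alpha>^2 * ?a + 2 * \<alpha> * (1 - \<alpha>) * ?b + (1 - \<alpha>)^2 * ?c"
      by (simp add: inner_add_left inner_add_right inner_commute power2_eq_square algebra_simps)
    have cb': "?c \<le> ?b" "?b \<le> ?a" "0 \<le> ?c" using cb[of z] upi[of z] by auto
    have "\<alpha> * (2 - \<alpha>) * ?c \<le> \<alpha>^2 * ?a + 2 * \<alpha> * (1 - \<alpha>) * ?b"
    proof -
      have "\<alpha>^2 * ?c \<le> \<alpha>^2 * ?a" using cb' by (intro mult_left_mono) auto
      moreover have "2 * \<alpha> * (1 - \<alpha>) * ?c \<le> 2 * \<alpha> * (1 - \<alpha>) * ?b"
        using cb' assms(2,3) by (intro mult_left_mono) auto
      ultimately show ?thesis by (simp add: power2_eq_square algebra_simps)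
    qed
    hence "?c \<le> \<alpha>^2 * ?a + 2 * \<alpha> * (1 - \<alpha>) * ?b + (1 - \<alpha>)^2 * ?c"
      by (simp add: power2_eq_square algebra_simps)
    hence "norm (G z) \<le> norm (\<alpha> *\<^sub>R w)" unfolding z2 norm_le e .
    hence "\<alpha> * norm (D (G w)) \<le> \<alpha> * norm w" using assms(2)
      by (metis z1 norm_scaleR abs_of_pos)
    thus ?thesis using assms(2) by simp
  qed
  have n2: "norm (w - D (G w)) \<le> norm w" for w
  proof -
    obtain z where z1: "\<alpha> *\<^sub>R D (G w) = G z" and z2: "\<alpha> *\<^sub>R w = \<alpha> *\<^sub>R z + (1 - \<alpha>) *\<^sub>R G z"
      using rep by blast
    let ?a = "z \<bullet> z" and ?b = "G z \<bullet> z" and ?c = "G z \<bullet> G z"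
    have eq: "\<alpha> *\<^sub>R (w - D (G w)) = \<alpha> *\<^sub>R (z - G z)"
      using z1 z2 by (simp add: algebra_simps)
    have e: "(\<alpha> *\<^sub>R z + (1 - \<alpha>) *\<^sub>R G z) \<bullet> (\<alpha> *\<^sub>R z + (1 - \<alpha>) *\<^sub>R G z)
        = \<alpha>^2 * ?a + 2 * \<alpha> * (1 - \<alpha>) * ?b + (1 - \<alpha>)^2 * ?c"
      by (simp add: inner_add_left inner_add_right inner_commute power2_eq_square algebra_simps)
    have e2: "(\<alpha> *\<^sub>R (z - G z)) \<bullet> (\<alpha> *\<^sub>R (z - G z)) = \<alpha>^2 * (?a - 2 * ?b + ?c)"
      by (simp add: inner_diff_left inner_diff_right inner_commute power2_eq_square algebra_simps)
    have cb': "?c \<le> ?b" "?b \<le> ?a" "0 \<le> ?c" using cb[of z] upi[of z] by auto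
    have "(2 * \<alpha> - 1) * ?c \<le> 2 * \<alpha> * ?b"
    proof -
      have "(2 * \<alpha> - 1) * ?c \<le> 2 * \<alpha> * ?c" using cb' by (simp add: algebra_simps)
      also have "\<dots> \<le> 2 * \<alpha> * ?b" using cb' assms(2) by (intro mult_left_mono) auto
      finally show ?thesis .
    qed
    hence "\<alpha>^2 * (?a - 2 * ?b + ?c) \<le> \<alpha>^2 * ?a + 2 * \<alpha> * (1 - \<alpha>) * ?b + (1 - \<alpha>)^2 * ?c"
      by (simp add: power2_eq_square algebra_simps)
    hence "norm (\<alpha> *\<^sub>R (z - G z)) \<le> norm (\<alpha> *\<^sub>R w)" unfolding z2 norm_le e e2 .
    hence "\<alpha> * norm (w - D (G w)) \<le> \<alpha> * norm w" using assms(2)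
      by (metis eq norm_scaleR abs_of_pos)
    thus ?thesis using assms(2) by simp
  qed
  have o1: "onorm D \<le> 1 / \<alpha>" using Dnorm assms(2) by (intro onorm_bound) (auto simp: mult.commute)
  have o2: "onorm (\<lambda>v. D (G v)) \<le> 1" using n1 by (intro onorm_bound) auto
  have o3: "onorm (\<lambda>v. v - D (G v)) \<le> 1" using n2 by (intro onorm_bound) auto
  show ?thesis using bijA blD blDG blIDG o1 o2 o3 by blast
qed

end
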